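(* Let $A\overset{i}{\to}U\overset{j}{\to}G$ and $A\overset{i'}{\to}U'\overset{j'}{\to}G$ be extensions of a semilattice of groups $A$ by a group $G$, and let $\pi:U\to S$, $\kappa:S\to G$ and $\pi':U'\to S'$, $\kappa':S'\to G$ be epimorphisms onto inverse semigroups such that $A\overset{i}{\to}U\overset{\pi}{\to}S$ and $A\overset{i'}{\to}U'\overset{\pi'}{\to}S'$ are extensions of $A$ by $S$ and by $S'$ respectively, $j=\kappa\circ\pi$ and $j'=\kappa'\circ\pi'$. Given a homomorphism $\mu:U\to U'$ with $\mu\circ i=i'$ and $j'\circ\mu=j$, there exists a homomorphism $\nu:S\to S'$ such that $\nu\circ\pi=\pi'\circ\mu$ and $\kappa'\circ\nu=\kappa$. Moreover, if $\mu$ is injective then $\nu$ is injective, and if $\mu$ is surjective then $\nu$ is surjective.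
   Context: A semilattice of groups is an inverse semigroup whose idempotents are central. An extension of $A$ by a group $G$ is an inverse semigroup $U$ with a monomorphism $i:A\to U$ and an epimorphism $j:U\to G$ with $i(A)=j^{-1}(1)$. An extension of $A$ by an inverse semigroup $S$ is an inverse semigroup $U$ with a monomorphism $i:A\to U$ and an idempotent-separating epimorphism $\pi:U\to S$ with $i(A)=\pi^{-1}(E(S))$. *)

theory Defs
  imports "HOL-Algebra.Group"
begin

text \<open>Semigroups are modelled by HOL-Algebra monoid records (the unit field is ignored);
  homomorphisms are the HOL-Algebra multiplicative homomorphisms hom, which do not
  mention the unit.\<close>

definition inverse_semigroup :: "('a, 'm) monoid_scheme \<Rightarrow> bool" where
  "inverse_semigroup S \<longleftrightarrow> 
     (\<forall>x\<in>carrier S. \<forall>y\<in>carrier S. x \<otimes>\<^bsub>S\<^esub> y \<in> carrier S) \<and>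
     (\<forall>x\<in>carrier S. \<forall>y\<in>carrier S. \<forall>z\<in>carrier S.
        x \<otimes>\<^bsub>S\<^esub> y \<otimes>\<^bsub>S\<^esub> z = x \<otimes>\<^bsub>S\<^esub> (y \<otimes>\<^bsub>S\<^esub> z)) \<and>
     (\<forall>a\<in>carrier S. \<exists>!b. b \<in> carrier S \<and>
        a \<otimes>\<^bsub>S\<^esub> b \<otimes>\<^bsub>S\<^esub> a = a \<and> b \<otimes>\<^bsub>S\<^esub> a \<otimes>\<^bsub>S\<^esub> b = b)"

definition idempotents :: "('a, 'm) monoid_scheme \<Rightarrow> 'a set" where
  "idempotents S = {e \<in> carrier S. e \<otimes>\<^bsub>S\<^esub> e = e}"

definition semilattice_of_groups :: "('a, 'm) monoid_scheme \<Rightarrow> bool" where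
  "semilattice_of_groups A \<longleftrightarrow> inverse_semigroup A \<and>
     (\<forall>e\<in>idempotents A. \<forall>a\<in>carrier A. e \<otimes>\<^bsub>A\<^esub> a = a \<otimes>\<^bsub>A\<^esub> e)"

definition monomorphism :: "('a, 'm) monoid_scheme \<Rightarrow> ('b, 'n) monoid_scheme \<Rightarrow> ('a \<Rightarrow> 'b) \<Rightarrow> bool" where
  "monomorphism A B f \<longleftrightarrow> f \<in> hom A B \<and> inj_on f (carrier A)"

definition epimorphism :: "('a, 'm) monoid_scheme \<Rightarrow> ('b, 'n) monoid_scheme \<Rightarrow> ('a \<Rightarrow> 'b) \<Rightarrow> bool" where
  "epimorphism A B f \<longleftrightarrow> f \<in> hom A B \<and> f ` carrier A = carrier B"

definition group_extension ::
  "('a, 'm) monoid_scheme \<Rightarrow> ('u, 'n) monoid_scheme \<Rightarrow> ('g, 'k) monoid_scheme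
   \<Rightarrow> ('a \<Rightarrow> 'u) \<Rightarrow> ('u \<Rightarrow> 'g) \<Rightarrow> bool" where
  "group_extension A U G i j \<longleftrightarrow> inverse_semigroup A \<and> inverse_semigroup U \<and> group G \<and>
     monomorphism A U i \<and> epimorphism U G j \<and>
     i ` carrier A = {u \<in> carrier U. j u = \<one>\<^bsub>G\<^esub>}"

definition inv_sg_extension ::
  "('a, 'm) monoid_scheme \<Rightarrow> ('u, 'n) monoid_scheme \<Rightarrow> ('s, 'k) monoid_scheme
   \<Rightarrow> ('a \<Rightarrow> 'u) \<Rightarrow> ('u \<Rightarrow> 's) \<Rightarrow> bool" where
  "inv_sg_extension A U S i p \<longleftrightarrow> inverse_semigroup A \<and> inverse_semigroup U \<and> inverse_semigroup S \<and>
     monomorphism A U i \<and> epimorphism U S p \<and> inj_on p (idempotents U) \<and>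
     i ` carrier A = {u \<in> carrier U. p u \<in> idempotents S}"

end

theory Submission
  imports Defs
begin

definition sinv :: "('a, 'm) monoid_scheme \<Rightarrow> 'a \<Rightarrow> 'a" where
  "sinv S a = (THE b. b \<in> carrier S \<and> a \<otimes>\<^bsub>S\<^esub> b \<otimes>\<^bsub>S\<^esub> a = a \<and> b \<otimes>\<^bsub>S\<^esub> a \<otimes>\<^bsub>S\<^esub> b = b)"

lemma is_closed: "inverse_semigroup S \<Longrightarrow> x \<in> carrier S \<Longrightarrow> y \<in> carrier S \<Longrightarrow> x \<otimes>\<^bsub>S\<^esub> y \<in> carrier S"
  unfolding inverse_semigroup_def by blast

lemma is_assoc: "inverse_semigroup S \<Longrightarrow> x \<in> carrier S \<Longrightarrow> y \<in> carrier S \<Longrightarrow> z \<in> carrier S \<Longrightarrow>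
   x \<otimes>\<^bsub>S\<^esub> y \<otimes>\<^bsub>S\<^esub> z = x \<otimes>\<^bsub>S\<^esub> (y \<otimes>\<^bsub>S\<^esub> z)"
  unfolding inverse_semigroup_def by blast

lemma sinv_props:
  assumes "inverse_semigroup S" "a \<in> carrier S"
  shows "sinv S a \<in> carrier S \<and> a \<otimes>\<^bsub>S\<^esub> sinv S a \<otimes>\<^bsub>S\<^esub> a = a \<and> sinv S a \<otimes>\<^bsub>S\<^esub> a \<otimes>\<^bsub>S\<^esub> sinv S a = sinv S a"
proof -
  have "\<exists>!b. b \<in> carrier S \<and> a \<otimes>\<^bsub>S\<^esub> b \<otimes>\<^bsub>S\<^esub> a = a \<and> b \<otimes>\<^bsub>S\<^esub> a \<otimes>\<^bsub>S\<^esub> b = b"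
    using assms unfolding inverse_semigroup_def by blast
  then show ?thesis unfolding sinv_def by (rule theI')
qed

lemma sinv_mem: "inverse_semigroup S \<Longrightarrow> a \<in> carrier S \<Longrightarrow> sinv S a \<in> carrier S"
  using sinv_props[of S a] by blast

lemma sinv_unique:
  assumes "inverse_semigroup S" "a \<in> carrier S" "b \<in> carrier S"
    "a \<otimes>\<^bsub>S\<^esub> b \<otimes>\<^bsub>S\<^esub> a = a" "b \<otimes>\<^bsub>S\<^esub> a \<otimes>\<^bsub>S\<^esub> b = b"
  shows "sinv S a = b"
proof -
  have "\<exists>!b. b \<in> carrier S \<and> a \<otimes>\<^bsub>S\<^esub> b \<otimes>\<^bsub>S\<^esub> a = a \<and> b \<otimes>\<^bsub>S\<^esub> a \<otimes>\<^bsub>S\<^esub> b = b"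
    using assms unfolding inverse_semigroup_def by blast
  then show ?thesis unfolding sinv_def using assms by (intro the1_equality) auto
qed

lemma hom_sinv:
  assumes "inverse_semigroup S" "inverse_semigroup T" "f \<in> hom S T" "a \<in> carrier S"
  shows "f (sinv S a) = sinv T (f a)"
proof -
  note p = sinv_props[OF assms(1,4)]
  have c: "\<And>x. x \<in> carrier S \<Longrightarrow> f x \<in> carrier T" using assms(3) unfolding hom_def by auto
  have m: "\<And>x y. x \<in> carrier S \<Longrightarrow> y \<in> carrier S \<Longrightarrow> f (x \<otimes>\<^bsub>S\<^esub> y) = f x \<otimes>\<^bsub>T\<^esub> f y"
    using assms(3) unfolding hom_def by auto
  have cl: "\<And>x y. x \<in> carrier S \<Longrightarrow> y \<in> carrier S \<Longrightarrow> x \<otimes>\<^bsub>S\<^esub> y \<in> carrier S"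
    using is_closed[OF assms(1)] by blast
  have 1: "f a \<otimes>\<^bsub>T\<^esub> f (sinv S a) \<otimes>\<^bsub>T\<^esub> f a = f a"
    using p m cl assms(4) by metis
  have 2: "f (sinv S a) \<otimes>\<^bsub>T\<^esub> f a \<otimes>\<^bsub>T\<^esub> f (sinv S a) = f (sinv S a)"
    using p m cl assms(4) by metis
  show ?thesis using sinv_unique[OF assms(2) c[OF assms(4)] c 1 2] p by simp
qed

lemma key:
  assumes S: "inverse_semigroup S" and x: "x \<in> carrier S" and y: "y \<in> carrier S"
    and h1: "x \<otimes>\<^bsub>S\<^esub> sinv S x = y \<otimes>\<^bsub>S\<^esub> sinv S y"
    and h2: "sinv S x \<otimes>\<^bsub>S\<^esub> x = sinv S y \<otimes>\<^bsub>S\<^esub> y"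
    and e: "sinv S x \<otimes>\<^bsub>S\<^esub> y \<in> idempotents S"
    and f: "sinv S y \<otimes>\<^bsub>S\<^esub> x \<in> idempotents S"
  shows "x = y"
proof -
  note A = is_assoc[OF S] and C = is_closed[OF S]
  define xi where "xi = sinv S x"
  define yi where "yi = sinv S y"
  have xi: "xi \<in> carrier S" "x \<otimes>\<^bsub>S\<^esub> xi \<otimes>\<^bsub>S\<^esub> x = x" using sinv_props[OF S x] xi_def by auto
  have yi: "yi \<in> carrier S" "y \<otimes>\<^bsub>S\<^esub> yi \<otimes>\<^bsub>S\<^esub> y = y" using sinv_props[OF S y] yi_def by auto
  define E where "E = xi \<otimes>\<^bsub>S\<^esub> y"
  define F where "F = yi \<otimes>\<^bsub>S\<^esub> x"
  have Ec: "E \<in> carrier S" using E_def C xi y by auto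
  have Fc: "F \<in> carrier S" using F_def C yi x by auto
  have EE: "E \<otimes>\<^bsub>S\<^esub> E = E" using e unfolding E_def xi_def idempotents_def by auto
  have EF: "E \<otimes>\<^bsub>S\<^esub> F = xi \<otimes>\<^bsub>S\<^esub> x"
  proof -
    have "E \<otimes>\<^bsub>S\<^esub> F = xi \<otimes>\<^bsub>S\<^esub> (y \<otimes>\<^bsub>S\<^esub> yi) \<otimes>\<^bsub>S\<^esub> x"
      unfolding E_def F_def using A C xi yi x y by metis
    also have "\<dots> = xi \<otimes>\<^bsub>S\<^esub> (x \<otimes>\<^bsub>S\<^esub> xi) \<otimes>\<^bsub>S\<^esub> x" using h1 xi_def yi_def by simp
    also have "\<dots> = (xi \<otimes>\<^bsub>S\<^esub> x \<otimes>\<^bsub>S\<^esub> xi) \<otimes>\<^bsub>S\<^esub> x" using A C xi x by metis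
    also have "\<dots> = xi \<otimes>\<^bsub>S\<^esub> x" using sinv_props[OF S x] xi_def by simp
    finally show ?thesis .
  qed
  have EG: "E \<otimes>\<^bsub>S\<^esub> (xi \<otimes>\<^bsub>S\<^esub> x) = E"
  proof -
    have "E \<otimes>\<^bsub>S\<^esub> (xi \<otimes>\<^bsub>S\<^esub> x) = xi \<otimes>\<^bsub>S\<^esub> (y \<otimes>\<^bsub>S\<^esub> (yi \<otimes>\<^bsub>S\<^esub> y))"
      unfolding E_def using h2 xi_def yi_def A C xi yi x y by metis
    also have "\<dots> = E" unfolding E_def using yi A C y by metis
    finally show ?thesis .
  qed
  have "E \<otimes>\<^bsub>S\<^esub> (xi \<otimes>\<^bsub>S\<^esub> x) = E \<otimes>\<^bsub>S\<^esub> E \<otimes>\<^bsub>S\<^esub> F"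
    using EF A Ec Fc by metis
  then have Eg: "E = xi \<otimes>\<^bsub>S\<^esub> x" using EG EE EF by simp
  have "y = x \<otimes>\<^bsub>S\<^esub> xi \<otimes>\<^bsub>S\<^esub> y" using yi h1 xi_def yi_def by simp
  also have "\<dots> = x \<otimes>\<^bsub>S\<^esub> E" unfolding E_def using A x xi y by metis
  also have "\<dots> = x" using Eg xi A x by metis
  finally show ?thesis by simp
qed

lemma idem_sinv:
  assumes S: "inverse_semigroup S" and a: "a \<in> carrier S"
  shows "a \<otimes>\<^bsub>S\<^esub> sinv S a \<in> idempotents S" "sinv S a \<otimes>\<^bsub>S\<^esub> a \<in> idempotents S"
proof -
  note p = sinv_props[OF S a] and A = is_assoc[OF S] and C = is_closed[OF S]
  have "a \<otimes>\<^bsub>S\<^esub> sinv S a \<otimes>\<^bsub>S\<^esub> (a \<otimes>\<^bsub>S\<^esub> sinv S a) = a \<otimes>\<^bsub>S\<^esub> sinv S a"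
    using p A C a by metis
  then show "a \<otimes>\<^bsub>S\<^esub> sinv S a \<in> idempotents S" unfolding idempotents_def using p C a by auto
  have "sinv S a \<otimes>\<^bsub>S\<^esub> a \<otimes>\<^bsub>S\<^esub> (sinv S a \<otimes>\<^bsub>S\<^esub> a) = sinv S a \<otimes>\<^bsub>S\<^esub> a"
    using p A C a by metis
  then show "sinv S a \<otimes>\<^bsub>S\<^esub> a \<in> idempotents S" unfolding idempotents_def using p C a by auto
qed


lemma hom_mem: "f \<in> hom S T \<Longrightarrow> x \<in> carrier S \<Longrightarrow> f x \<in> carrier T"
  unfolding hom_def by auto

lemma hom_mul: "f \<in> hom S T \<Longrightarrow> x \<in> carrier S \<Longrightarrow> y \<in> carrier S \<Longrightarrow> f (x \<otimes>\<^bsub>S\<^esub> y) = f x \<otimes>\<^bsub>T\<^esub> f y"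
  unfolding hom_def by auto

lemma hom_comp: "f \<in> hom S T \<Longrightarrow> g \<in> hom T R \<Longrightarrow> (\<lambda>x. g (f x)) \<in> hom S R"
  unfolding hom_def by (auto simp: Pi_def)

lemma transfer:
  assumes U: "inverse_semigroup U" and T: "inverse_semigroup T" and ph: "\<phi> \<in> hom U T"
    and u: "u \<in> carrier U" and v: "v \<in> carrier U"
    and h1: "u \<otimes>\<^bsub>U\<^esub> sinv U u = v \<otimes>\<^bsub>U\<^esub> sinv U v"
    and h2: "sinv U u \<otimes>\<^bsub>U\<^esub> u = sinv U v \<otimes>\<^bsub>U\<^esub> v"
    and e: "\<phi> (sinv U u \<otimes>\<^bsub>U\<^esub> v) \<in> idempotents T"
    and f: "\<phi> (sinv U v \<otimes>\<^bsub>U\<^esub> u) \<in> idempotents T"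
  shows "\<phi> u = \<phi> v"
proof -
  have iu: "sinv U u \<in> carrier U" and iv: "sinv U v \<in> carrier U" using sinv_mem[OF U u] sinv_mem[OF U v] by auto
  have su: "\<phi> (sinv U u) = sinv T (\<phi> u)" and sv: "\<phi> (sinv U v) = sinv T (\<phi> v)"
    using hom_sinv[OF U T ph] u v by auto
  show ?thesis
  proof (rule key[OF T hom_mem[OF ph u] hom_mem[OF ph v]])
    show "\<phi> u \<otimes>\<^bsub>T\<^esub> sinv T (\<phi> u) = \<phi> v \<otimes>\<^bsub>T\<^esub> sinv T (\<phi> v)"
      using h1 hom_mul[OF ph u iv] hom_mul[OF ph iu v] hom_mul[OF ph u iu] hom_mul[OF ph v iv] hom_mul[OF ph iu u] hom_mul[OF ph iv v] hom_mul[OF ph iv u] su sv by simp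
    show "sinv T (\<phi> u) \<otimes>\<^bsub>T\<^esub> \<phi> u = sinv T (\<phi> v) \<otimes>\<^bsub>T\<^esub> \<phi> v"
      using h2 hom_mul[OF ph u iv] hom_mul[OF ph iu v] hom_mul[OF ph u iu] hom_mul[OF ph v iv] hom_mul[OF ph iu u] hom_mul[OF ph iv v] hom_mul[OF ph iv u] su sv by simp
    show "sinv T (\<phi> u) \<otimes>\<^bsub>T\<^esub> \<phi> v \<in> idempotents T"
      using e hom_mul[OF ph u iv] hom_mul[OF ph iu v] hom_mul[OF ph u iu] hom_mul[OF ph v iv] hom_mul[OF ph iu u] hom_mul[OF ph iv v] hom_mul[OF ph iv u] su sv by simp
    show "sinv T (\<phi> v) \<otimes>\<^bsub>T\<^esub> \<phi> u \<in> idempotents T"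
      using f hom_mul[OF ph u iv] hom_mul[OF ph iu v] hom_mul[OF ph u iu] hom_mul[OF ph v iv] hom_mul[OF ph iu u] hom_mul[OF ph iv v] hom_mul[OF ph iv u] su sv by simp
  qed
qed

lemma idem_eq:
  assumes U: "inverse_semigroup U" and T: "inverse_semigroup T" and ph: "\<phi> \<in> hom U T"
    and inj: "inj_on \<phi> (idempotents U)"
    and u: "u \<in> carrier U" and v: "v \<in> carrier U" and eq: "\<phi> u = \<phi> v"
  shows "u \<otimes>\<^bsub>U\<^esub> sinv U u = v \<otimes>\<^bsub>U\<^esub> sinv U v" "sinv U u \<otimes>\<^bsub>U\<^esub> u = sinv U v \<otimes>\<^bsub>U\<^esub> v"
proof -
  have iu: "sinv U u \<in> carrier U" and iv: "sinv U v \<in> carrier U" using sinv_mem[OF U u] sinv_mem[OF U v] by auto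
  have su: "\<phi> (sinv U u) = sinv T (\<phi> u)" and sv: "\<phi> (sinv U v) = sinv T (\<phi> v)"
    using hom_sinv[OF U T ph] u v by auto
  have "\<phi> (u \<otimes>\<^bsub>U\<^esub> sinv U u) = \<phi> (v \<otimes>\<^bsub>U\<^esub> sinv U v)"
    using hom_mul[OF ph u iu] hom_mul[OF ph v iv] hom_mul[OF ph iu u] hom_mul[OF ph iv v] su sv eq by simp
  then show "u \<otimes>\<^bsub>U\<^esub> sinv U u = v \<otimes>\<^bsub>U\<^esub> sinv U v"
    using inj idem_sinv[OF U u] idem_sinv[OF U v] unfolding inj_on_def by blast
  have "\<phi> (sinv U u \<otimes>\<^bsub>U\<^esub> u) = \<phi> (sinv U v \<otimes>\<^bsub>U\<^esub> v)"
    using hom_mul[OF ph u iu] hom_mul[OF ph v iv] hom_mul[OF ph iu u] hom_mul[OF ph iv v] su sv eq by simp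
  then show "sinv U u \<otimes>\<^bsub>U\<^esub> u = sinv U v \<otimes>\<^bsub>U\<^esub> v"
    using inj idem_sinv[OF U u] idem_sinv[OF U v] unfolding inj_on_def by blast
qed

lemma cross_idem:
  assumes U: "inverse_semigroup U" and T: "inverse_semigroup T" and ph: "\<phi> \<in> hom U T"
    and u: "u \<in> carrier U" and v: "v \<in> carrier U" and eq: "\<phi> u = \<phi> v"
  shows "\<phi> (sinv U u \<otimes>\<^bsub>U\<^esub> v) \<in> idempotents T"
proof -
  have iu: "sinv U u \<in> carrier U" using sinv_mem[OF U u] by auto
  have "\<phi> (sinv U u \<otimes>\<^bsub>U\<^esub> v) = sinv T (\<phi> u) \<otimes>\<^bsub>T\<^esub> \<phi> u"
    using hom_mul[OF ph iu v] hom_sinv[OF U T ph u] eq by simp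
  then show ?thesis using idem_sinv[OF T hom_mem[OF ph u]] by simp
qed

lemma welldef:
  assumes eS: "inv_sg_extension A U S i \<pi>" and eS': "inv_sg_extension A U' S' i' \<pi>'"
    and mu: "\<mu> \<in> hom U U'" and mi: "\<forall>a\<in>carrier A. \<mu> (i a) = i' a"
    and u: "u \<in> carrier U" and v: "v \<in> carrier U" and eq: "\<pi> u = \<pi> v"
  shows "\<pi>' (\<mu> u) = \<pi>' (\<mu> v)"
proof -
  have U: "inverse_semigroup U" and S: "inverse_semigroup S" and pi: "\<pi> \<in> hom U S"
    and injp: "inj_on \<pi> (idempotents U)" and iA: "i ` carrier A = {u \<in> carrier U. \<pi> u \<in> idempotents S}"
    using eS unfolding inv_sg_extension_def epimorphism_def by auto
  have U': "inverse_semigroup U'" and S': "inverse_semigroup S'" and pi': "\<pi>' \<in> hom U' S'"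
    and iA': "i' ` carrier A = {u \<in> carrier U'. \<pi>' u \<in> idempotents S'}"
    using eS' unfolding inv_sg_extension_def epimorphism_def by auto
  have ph: "(\<lambda>x. \<pi>' (\<mu> x)) \<in> hom U S'" by (rule hom_comp[OF mu pi'])
  have iu: "sinv U u \<in> carrier U" and iv: "sinv U v \<in> carrier U" using sinv_mem[OF U u] sinv_mem[OF U v] by auto
  have X: "\<pi>' (\<mu> (sinv U a \<otimes>\<^bsub>U\<^esub> b)) \<in> idempotents S'"
    if a: "a \<in> carrier U" and b: "b \<in> carrier U" and ab: "\<pi> a = \<pi> b" for a b
  proof -
    have ia: "sinv U a \<in> carrier U" using sinv_mem[OF U a] by auto
    have "sinv U a \<otimes>\<^bsub>U\<^esub> b \<in> i ` carrier A"
      using iA cross_idem[OF U S pi a b ab] is_closed[OF U ia b] by auto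
    then obtain c where c: "c \<in> carrier A" "sinv U a \<otimes>\<^bsub>U\<^esub> b = i c" by auto
    then have "i' c \<in> i' ` carrier A" by auto
    then show ?thesis using iA' c mi by auto
  qed
  show ?thesis
    by (rule transfer[OF U S' ph u v idem_eq[OF U S pi injp u v eq] X[OF u v eq] X[OF v u eq[symmetric]]])
qed

lemma injdef:
  assumes eS: "inv_sg_extension A U S i \<pi>" and eS': "inv_sg_extension A U' S' i' \<pi>'"
    and mu: "\<mu> \<in> hom U U'" and mi: "\<forall>a\<in>carrier A. \<mu> (i a) = i' a"
    and minj: "inj_on \<mu> (carrier U)"
    and u: "u \<in> carrier U" and v: "v \<in> carrier U" and eq: "\<pi>' (\<mu> u) = \<pi>' (\<mu> v)"
  shows "\<pi> u = \<pi> v"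
proof -
  have U: "inverse_semigroup U" and S: "inverse_semigroup S" and pi: "\<pi> \<in> hom U S"
    and iA: "i ` carrier A = {u \<in> carrier U. \<pi> u \<in> idempotents S}"
    and ihom: "i \<in> hom A U"
    using eS unfolding inv_sg_extension_def epimorphism_def monomorphism_def by auto
  have U': "inverse_semigroup U'" and S': "inverse_semigroup S'" and pi': "\<pi>' \<in> hom U' S'"
    and injp': "inj_on \<pi>' (idempotents U')"
    and iA': "i' ` carrier A = {u \<in> carrier U'. \<pi>' u \<in> idempotents S'}"
    using eS' unfolding inv_sg_extension_def epimorphism_def by auto
  have ph: "(\<lambda>x. \<pi>' (\<mu> x)) \<in> hom U S'" by (rule hom_comp[OF mu pi'])
  have muid: "\<mu> e \<in> idempotents U'" if "e \<in> idempotents U" for e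
    using that hom_mul[OF mu] hom_mem[OF mu] unfolding idempotents_def by (auto simp del: ) (metis)
  have injph: "inj_on (\<lambda>x. \<pi>' (\<mu> x)) (idempotents U)"
    unfolding inj_on_def
  proof (intro ballI impI)
    fix x y assume x: "x \<in> idempotents U" and y: "y \<in> idempotents U" and "\<pi>' (\<mu> x) = \<pi>' (\<mu> y)"
    then have "\<mu> x = \<mu> y" using injp' muid unfolding inj_on_def by blast
    then show "x = y" using minj x y unfolding inj_on_def idempotents_def by blast
  qed
  have X: "\<pi> (sinv U a \<otimes>\<^bsub>U\<^esub> b) \<in> idempotents S"
    if a: "a \<in> carrier U" and b: "b \<in> carrier U" and ab: "\<pi>' (\<mu> a) = \<pi>' (\<mu> b)" for a b
  proof -
    have ia: "sinv U a \<in> carrier U" using sinv_mem[OF U a] by auto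
    have w: "sinv U a \<otimes>\<^bsub>U\<^esub> b \<in> carrier U" using is_closed[OF U ia b] .
    have "\<mu> (sinv U a \<otimes>\<^bsub>U\<^esub> b) \<in> i' ` carrier A"
      using iA' cross_idem[OF U S' ph a b ab] hom_mem[OF mu w] by auto
    then obtain c where c: "c \<in> carrier A" "\<mu> (sinv U a \<otimes>\<^bsub>U\<^esub> b) = i' c" by auto
    then have "\<mu> (sinv U a \<otimes>\<^bsub>U\<^esub> b) = \<mu> (i c)" using mi by auto
    then have "sinv U a \<otimes>\<^bsub>U\<^esub> b = i c" using minj w hom_mem[OF ihom c(1)] unfolding inj_on_def by blast
    then have "sinv U a \<otimes>\<^bsub>U\<^esub> b \<in> i ` carrier A" using c by auto
    then show ?thesis using iA by auto
  qed
  show ?thesis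
    by (rule transfer[OF U S pi u v idem_eq[OF U S' ph injph u v eq] X[OF u v eq] X[OF v u eq[symmetric]]])
qed

theorem proposition4p6:
  fixes A :: "('a, 'm) monoid_scheme" and U :: "('u, 'n) monoid_scheme"
    and U' :: "('v, 'o) monoid_scheme" and G :: "('g, 'k) monoid_scheme"
    and S :: "('s, 'p) monoid_scheme" and S' :: "('t, 'q) monoid_scheme"
    and i :: "'a \<Rightarrow> 'u" and j :: "'u \<Rightarrow> 'g" and i' :: "'a \<Rightarrow> 'v" and j' :: "'v \<Rightarrow> 'g"
    and \<pi> :: "'u \<Rightarrow> 's" and \<kappa> :: "'s \<Rightarrow> 'g" and \<pi>' :: "'v \<Rightarrow> 't" and \<kappa>' :: "'t \<Rightarrow> 'g"
    and \<mu> :: "'u \<Rightarrow> 'v"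
  assumes "semilattice_of_groups A"
    and "group_extension A U G i j"
    and "group_extension A U' G i' j'"
    and "inverse_semigroup S" and "inverse_semigroup S'"
    and "epimorphism U S \<pi>" and "epimorphism S G \<kappa>"
    and "epimorphism U' S' \<pi>'" and "epimorphism S' G \<kappa>'"
    and "inv_sg_extension A U S i \<pi>"
    and "inv_sg_extension A U' S' i' \<pi>'"
    and "\<forall>u\<in>carrier U. j u = \<kappa> (\<pi> u)"
    and "\<forall>u\<in>carrier U'. j' u = \<kappa>' (\<pi>' u)"
    and "\<mu> \<in> hom U U'"
    and "\<forall>a\<in>carrier A. \<mu> (i a) = i' a"
    and "\<forall>u\<in>carrier U. j' (\<mu> u) = j u"
  shows "\<exists>\<nu> \<in> hom S S'.
           (\<forall>u\<in>carrier U. \<nu> (\<pi> u) = \<pi>' (\<mu> u)) \<and>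
           (\<forall>s\<in>carrier S. \<kappa>' (\<nu> s) = \<kappa> s) \<and>
           (inj_on \<mu> (carrier U) \<longrightarrow> inj_on \<nu> (carrier S)) \<and>
           (\<mu> ` carrier U = carrier U' \<longrightarrow> \<nu> ` carrier S = carrier S')"
proof -
  note eS = assms(10) and eS' = assms(11) and mu = assms(14) and mi = assms(15)
  have U: "inverse_semigroup U" and pi: "\<pi> \<in> hom U S" and pisurj: "\<pi> ` carrier U = carrier S"
    using eS unfolding inv_sg_extension_def epimorphism_def by auto
  have pi': "\<pi>' \<in> hom U' S'" and pisurj': "\<pi>' ` carrier U' = carrier S'"
    using eS' unfolding inv_sg_extension_def epimorphism_def by auto
  define rep where "rep s = (SOME u. u \<in> carrier U \<and> \<pi> u = s)" for s
  have rep: "rep s \<in> carrier U \<and> \<pi> (rep s) = s" if "s \<in> carrier S" for s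
  proof -
    have "\<exists>u. u \<in> carrier U \<and> \<pi> u = s" using that pisurj by (metis imageE)
    then show ?thesis unfolding rep_def by (rule someI_ex)
  qed
  define \<nu> where "\<nu> s = \<pi>' (\<mu> (rep s))" for s
  have nupi: "\<nu> (\<pi> u) = \<pi>' (\<mu> u)" if u: "u \<in> carrier U" for u
    unfolding \<nu>_def using welldef[OF eS eS' mu mi _ u] rep[OF hom_mem[OF pi u]] by auto
  have hom: "\<nu> \<in> hom S S'"
    unfolding hom_def
  proof (intro CollectI conjI ballI)
    show "\<nu> \<in> carrier S \<rightarrow> carrier S'"
      unfolding \<nu>_def using rep hom_mem[OF pi'] hom_mem[OF mu] by auto
    fix x y assume x: "x \<in> carrier S" and y: "y \<in> carrier S"
    obtain u v where u: "u \<in> carrier U" "\<pi> u = x" and v: "v \<in> carrier U" "\<pi> v = y"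
      using rep x y by blast
    have uv: "u \<otimes>\<^bsub>U\<^esub> v \<in> carrier U" using is_closed[OF U] u v by auto
    have "\<nu> (x \<otimes>\<^bsub>S\<^esub> y) = \<nu> (\<pi> (u \<otimes>\<^bsub>U\<^esub> v))" using hom_mul[OF pi] u v by simp
    also have "\<dots> = \<pi>' (\<mu> (u \<otimes>\<^bsub>U\<^esub> v))" using nupi uv by simp
    also have "\<dots> = \<pi>' (\<mu> u) \<otimes>\<^bsub>S'\<^esub> \<pi>' (\<mu> v)"
      using hom_mul[OF mu] hom_mul[OF pi'] hom_mem[OF mu] u v by simp
    also have "\<dots> = \<nu> x \<otimes>\<^bsub>S'\<^esub> \<nu> y" using nupi[OF u(1)] nupi[OF v(1)] u v by simp
    finally show "\<nu> (x \<otimes>\<^bsub>S\<^esub> y) = \<nu> x \<otimes>\<^bsub>S'\<^esub> \<nu> y" .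
  qed
  have kap: "\<forall>s\<in>carrier S. \<kappa>' (\<nu> s) = \<kappa> s"
  proof
    fix s assume s: "s \<in> carrier S"
    obtain u where u: "u \<in> carrier U" "\<pi> u = s" using rep s by blast
    show "\<kappa>' (\<nu> s) = \<kappa> s"
      using nupi[OF u(1)] u assms(12,13,16) hom_mem[OF mu u(1)] by metis
  qed
  have inj: "inj_on \<mu> (carrier U) \<longrightarrow> inj_on \<nu> (carrier S)"
  proof
    assume minj: "inj_on \<mu> (carrier U)"
    show "inj_on \<nu> (carrier S)" unfolding inj_on_def
    proof (intro ballI impI)
      fix x y assume x: "x \<in> carrier S" and y: "y \<in> carrier S" and e: "\<nu> x = \<nu> y"
      obtain u v where u: "u \<in> carrier U" "\<pi> u = x" and v: "v \<in> carrier U" "\<pi> v = y"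
        using rep x y by blast
      have "\<pi>' (\<mu> u) = \<pi>' (\<mu> v)" using e nupi u v by metis
      then show "x = y" using injdef[OF eS eS' mu mi minj u(1) v(1)] u v by simp
    qed
  qed
  have surj: "\<mu> ` carrier U = carrier U' \<longrightarrow> \<nu> ` carrier S = carrier S'"
  proof
    assume ms: "\<mu> ` carrier U = carrier U'"
    show "\<nu> ` carrier S = carrier S'"
    proof
      show "\<nu> ` carrier S \<subseteq> carrier S'" using hom unfolding hom_def by auto
      show "carrier S' \<subseteq> \<nu> ` carrier S"
      proof
        fix t assume "t \<in> carrier S'"
        then obtain w where w: "w \<in> carrier U'" "\<pi>' w = t" using pisurj' by (metis imageE)
        then obtain u where u: "u \<in> carrier U" "\<mu> u = w" using ms w(1) by (metis imageE)
        have "\<nu> (\<pi> u) = t" using nupi u w by simp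
        then show "t \<in> \<nu> ` carrier S" using hom_mem[OF pi u(1)] by blast
      qed
    qed
  qed
  show ?thesis using hom nupi kap inj surj by blast
qed

end
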